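(* Let $k\ge5$ be an integer and let $F:(\mathbb R^3\times\mathbb R,0)\to(\mathbb R^2,0)$, $F(x,y,z,t)=\bigl(x,\ (y(x^2+y^2+z^2))^3+x^2y(x^2+y^2+z^2)+tx^k\bigr)$, viewed as a deformation of $F_0=F(\cdot,\cdot,\cdot,0)$. Then $\operatorname{Sing}F=V(F)=\{x=y=0\}$; $F$ does not satisfy condition (L): there is no $0<\theta<1$ such that for every $x_0\in F_0^{-1}(0)\cap\operatorname{Sing}F_0\setminus\{0\}$ some $c(x_0)>0$ gives $\|F(x,t)\|^\theta\le c(x_0)\nu_{F_t}(x)$ for $(x,t)\notin\operatorname{Sing}\widetilde F$ near $(x_0,0)$; whereas $F$ does satisfy condition (P): for every $p\in F_0^{-1}(0)\cap\operatorname{Sing}F_0\setminus\{0\}$ there is $c(p)>0$ with $\|\partial F/\partial t(x,y,z,t)\|\le c(p)\nu_{F_t}(x,y,z)$ for all points $\notin\operatorname{Sing}\widetilde F$ near $(p,0)$.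
   Context: For $F=(f_1,\dots,f_m)$ depending on $(u,t)\in\mathbb R^n\times\mathbb R$, $\nu_{F_t}(u):=\min_{a\in\mathbb R^m,\|a\|=1}\bigl\|\sum_i a_i\operatorname{grad}_u f_i(u,t)\bigr\|$, where $\operatorname{grad}_u$ contains only the derivatives in the variables $u$ (here $u=(x,y,z)$). $\widetilde F(u,t)=(F(u,t),t)$; $V(F)=F^{-1}(0)$; $\operatorname{Sing}$ of a map is the set where its Jacobian has rank less than the target dimension. *)

theory Defs
  imports "HOL-Analysis.Analysis"
begin

definition grad :: "('a::euclidean_space \<Rightarrow> real) \<Rightarrow> 'a \<Rightarrow> 'a" where
  "grad f u = (\<Sum>b\<in>Basis. frechet_derivative f (at u) b *\<^sub>R b)"

definition nu :: "('a::euclidean_space \<Rightarrow> 'b::euclidean_space) \<Rightarrow> 'a \<Rightarrow> real" where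
  "nu G u = Inf {norm (\<Sum>i\<in>Basis. (a \<bullet> i) *\<^sub>R grad (\<lambda>v. G v \<bullet> i) u) | a::'b. norm a = 1}"

definition Sing :: "('a::euclidean_space \<Rightarrow> 'b::euclidean_space) \<Rightarrow> 'a set" where
  "Sing G = {p. dim (range (frechet_derivative G (at p))) < DIM('b)}"

definition Fk :: "nat \<Rightarrow> real^3 \<Rightarrow> real \<Rightarrow> real^2" where
  "Fk k u t = (let x = u$1; y = u$2; z = u$3; r = x^2 + y^2 + z^2 in
     vector [x, (y * r)^3 + x^2 * y * r + t * x^k])"

definition Fmap :: "nat \<Rightarrow> (real^3) \<times> real \<Rightarrow> real^2" where
  "Fmap k p = Fk k (fst p) (snd p)"

definition Ftilde :: "nat \<Rightarrow> (real^3) \<times> real \<Rightarrow> (real^2) \<times> real" where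
  "Ftilde k p = (Fmap k p, snd p)"

end

theory Submission imports Defs begin

definition rr :: "real^3 \<Rightarrow> real" where "rr u = (u$1)^2+(u$2)^2+(u$3)^2"
definition GX :: "nat \<Rightarrow> real^3 \<Rightarrow> real \<Rightarrow> real" where
 "GX k u t = 6*(u$1)*(u$2)^3*(rr u)^2 + 2*(u$1)*(u$2)*rr u + 2*(u$1)^3*(u$2) + t*real k*(u$1)^(k-1)"
definition GY :: "real^3 \<Rightarrow> real" where
 "GY u = (rr u + 2*(u$2)^2)*(3*(u$2)^2*(rr u)^2 + (u$1)^2)"
definition GZ :: "real^3 \<Rightarrow> real" where
 "GZ u = 6*(u$2)^3*(rr u)^2*(u$3) + 2*(u$1)^2*(u$2)*(u$3)"

lemma vec_has_derivative:
  fixes f :: "'a::real_normed_vector \<Rightarrow> real^'n"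
  assumes "\<And>i. ((\<lambda>x. f x $ i) has_derivative (\<lambda>h. f' h $ i)) (at a)"
  shows "(f has_derivative f') (at a)"
  apply (subst has_derivative_componentwise_within)
  using assms by (auto simp: Basis_vec_def inner_axis)

lemma nth_der: "(f has_derivative f') F \<Longrightarrow> ((\<lambda>x. f x $ i) has_derivative (\<lambda>h. f' h $ i)) F"
  by (rule bounded_linear.has_derivative[OF bounded_linear_vec_nth])

lemma fst_nth_der: "((\<lambda>x. fst x $ i) has_derivative (\<lambda>h. fst h $ i)) F"
  by (intro nth_der has_derivative_fst has_derivative_ident)

lemma scal_der: "((\<lambda>p::(real^3)\<times>real. ((fst p$2)*((fst p$1)^2+(fst p$2)^2+(fst p$3)^2))^3 + (fst p$1)^2*(fst p$2)*((fst p$1)^2+(fst p$2)^2+(fst p$3)^2) + snd p * (fst p$1)^k)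
   has_derivative (\<lambda>h. GX k (fst p) (snd p) * fst h $ 1 + GY (fst p) * fst h $ 2 + GZ (fst p) * fst h $ 3 + (fst p $ 1)^k * snd h)) (at p)"
  apply (rule has_derivative_eq_rhs)
   apply ((rule derivative_eq_intros fst_nth_der has_derivative_snd has_derivative_ident | rule refl)+)[1]
  apply (rule ext)
  apply (simp add: GX_def GY_def GZ_def rr_def)
  apply algebra
  done

definition DF :: "nat \<Rightarrow> real^3 \<Rightarrow> real \<Rightarrow> (real^3)\<times>real \<Rightarrow> real^2" where
  "DF k u t h = vector [fst h $ 1, GX k u t * fst h $ 1 + GY u * fst h $ 2 + GZ u * fst h $ 3 + (u$1)^k * snd h]"

lemma Fmap_nth1: "Fmap k p $ 1 = fst p $ 1"
  by (simp add: Fmap_def Fk_def Let_def)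
lemma Fmap_nth2: "Fmap k p $ 2 = ((fst p$2)*((fst p$1)^2+(fst p$2)^2+(fst p$3)^2))^3 + (fst p$1)^2*(fst p$2)*((fst p$1)^2+(fst p$2)^2+(fst p$3)^2) + snd p * (fst p$1)^k"
  by (simp add: Fmap_def Fk_def Let_def)

lemma Fmap_der: "(Fmap k has_derivative DF k (fst p) (snd p)) (at p)"
proof (rule vec_has_derivative)
  fix i :: 2
  consider "i = 1" | "i = 2" using exhaust_2 by blast
  then show "((\<lambda>x. Fmap k x $ i) has_derivative (\<lambda>h. DF k (fst p) (snd p) h $ i)) (at p)"
  proof cases
    case 1 then show ?thesis by (simp add: Fmap_nth1 DF_def fst_nth_der)
  next
    case 2 then show ?thesis using scal_der[of k p] by (simp add: Fmap_nth2 DF_def)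
  qed
qed

lemma Ftilde_der: "(Ftilde k has_derivative (\<lambda>h. (DF k (fst p) (snd p) h, snd h))) (at p)"
  unfolding Ftilde_def by (intro has_derivative_Pair Fmap_der has_derivative_snd has_derivative_ident)

lemma Fk_der: "((\<lambda>v. Fk k v t) has_derivative (\<lambda>h. vector [h$1, GX k u t * h$1 + GY u * h$2 + GZ u * h$3])) (at u)"
proof -
  have 1: "((\<lambda>v. (v,t)) has_derivative (\<lambda>h. (h,0))) (at u)"
    by (intro has_derivative_Pair has_derivative_ident has_derivative_const)
  have 2: "(Fmap k has_derivative DF k u t) (at (u,t))" using Fmap_der[of k "(u,t)"] by simp
  have "((\<lambda>v. Fmap k (v,t)) has_derivative (\<lambda>h. DF k u t (h,0))) (at u)"
    using diff_chain_at[OF 1 2] by (simp add: o_def)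
  then show ?thesis by (simp add: Fmap_def DF_def)
qed

lemma Fk_t_der: "((\<lambda>s. Fk k u s) has_vector_derivative vector [0, (u$1)^k]) (at t)"
  unfolding has_vector_derivative_def
proof (rule vec_has_derivative)
  fix i :: 2
  consider "i = 1" | "i = 2" using exhaust_2 by blast
  then show "((\<lambda>x. Fk k u x $ i) has_derivative (\<lambda>h. (h *\<^sub>R vector [0, (u$1)^k]) $ i)) (at t)"
  proof cases
    case 1 then show ?thesis by (simp add: Fk_def Let_def)
  next
    case 2 then show ?thesis unfolding Fk_def Let_def
      by (simp, intro derivative_eq_intros) auto
  qed
qed

lemma Basis2: "(Basis :: (real^2) set) = {axis 1 1, axis 2 1}"
  by (auto simp: Basis_vec_def) (metis exhaust_2)

lemma axis12: "axis 1 (1::real) \<noteq> (axis 2 1 :: real^2)"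
  by (simp add: axis_eq_axis)

lemma norm3: "norm (vector [p, q, r] :: real^3) = sqrt (p^2 + q^2 + r^2)"
  by (simp add: norm_vec_def L2_set_def sum_3)

lemma grad_lin:
  assumes "(f has_derivative (\<lambda>h. h \<bullet> g)) (at u)"
  shows "grad f u = g"
  unfolding grad_def frechet_derivative_at[OF assms, symmetric]
  by (subst (2) euclidean_representation[symmetric]) (simp add: inner_commute)

lemma nu_formula:
  fixes G :: "real^3 \<Rightarrow> real^2"
  assumes "(G has_derivative (\<lambda>h. vector [h$1, A*h$1 + B*h$2 + C*h$3])) (at u)"
  shows "nu G u = Inf {norm (vector [a$1 + a$2*A, a$2*B, a$2*C] :: real^3) | a::real^2. norm a = 1}"
proof -
  have d: "((\<lambda>v. G v \<bullet> i) has_derivative (\<lambda>h. vector [h$1, A*h$1 + B*h$2 + C*h$3] \<bullet> i)) (at u)" for i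
    by (rule bounded_linear.has_derivative[OF bounded_linear_inner_left assms])
  have g1: "grad (\<lambda>v. G v \<bullet> axis 1 1) u = axis 1 1"
    by (rule grad_lin) (use d[of "axis 1 1"] in \<open>simp add: inner_axis\<close>)
  have g2: "grad (\<lambda>v. G v \<bullet> axis 2 1) u = vector [A, B, C]"
  proof (rule grad_lin)
    have e: "(\<lambda>h. h \<bullet> vector [A, B, C]) = (\<lambda>h::real^3. vector [h$1, A*h$1 + B*h$2 + C*h$3] \<bullet> (axis 2 1 :: real^2))"
      by (rule ext) (simp add: inner_axis, simp add: inner_vec_def sum_3 mult.commute)
    show "((\<lambda>v. G v \<bullet> axis 2 1) has_derivative (\<lambda>h. h \<bullet> vector [A, B, C])) (at u)"
      unfolding e by (rule d)
  qed
  have "(\<Sum>i\<in>Basis. (a \<bullet> i) *\<^sub>R grad (\<lambda>v. G v \<bullet> i) u) = (vector [a$1 + a$2*A, a$2*B, a$2*C] :: real^3)" for a :: "real^2"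
    unfolding Basis2 using axis12 g1 g2
    by (simp add: inner_axis, simp add: vec_eq_iff forall_3 axis_def)
  then show ?thesis unfolding nu_def by simp
qed

lemma vec2_eq: "(v::real^2) = vector [v$1, v$2]"
  by (simp add: vec_eq_iff forall_2)

lemma rank_full_Fmap:
  assumes "b \<noteq> 0 \<or> d \<noteq> 0"
  shows "dim (range (\<lambda>h::(real^3)\<times>real. vector [fst h $ 1, a * fst h $ 1 + b * fst h $ 2 + c * fst h $ 3 + d * snd h] :: real^2)) = 2"
proof -
  have "range (\<lambda>h::(real^3)\<times>real. vector [fst h $ 1, a * fst h $ 1 + b * fst h $ 2 + c * fst h $ 3 + d * snd h] :: real^2) = UNIV"
  proof (rule sym[OF UNIV_eq_I])
    fix v :: "real^2"
    show "v \<in> range (\<lambda>h::(real^3)\<times>real. vector [fst h $ 1, a * fst h $ 1 + b * fst h $ 2 + c * fst h $ 3 + d * snd h] :: real^2)"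
    proof (cases "b \<noteq> 0")
      case True
      show ?thesis
        by (rule image_eqI[where x = "(vector [v$1, (v$2 - a * v$1)/b, 0], 0)"])
           (use True in \<open>simp_all add: vec_eq_iff forall_2\<close>)
    next
      case False
      then have "d \<noteq> 0" using assms by auto
      show ?thesis
        by (rule image_eqI[where x = "(vector [v$1, 0, 0], (v$2 - a * v$1)/d)"])
           (use \<open>d \<noteq> 0\<close> in \<open>simp_all add: vec_eq_iff forall_2\<close>)
    qed
  qed
  then show ?thesis by simp
qed

lemma rank_full_Ftilde:
  assumes "b \<noteq> 0"
  shows "dim (range (\<lambda>h::(real^3)\<times>real. (vector [fst h $ 1, a * fst h $ 1 + b * fst h $ 2 + c * fst h $ 3 + d * snd h] :: real^2, snd h))) = 3"
proof -
  have "range (\<lambda>h::(real^3)\<times>real. (vector [fst h $ 1, a * fst h $ 1 + b * fst h $ 2 + c * fst h $ 3 + d * snd h] :: real^2, snd h)) = UNIV"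
  proof (rule sym[OF UNIV_eq_I])
    fix vs :: "(real^2) \<times> real"
    obtain v s where vs: "vs = (v,s)" by (cases vs)
    show "vs \<in> range (\<lambda>h::(real^3)\<times>real. (vector [fst h $ 1, a * fst h $ 1 + b * fst h $ 2 + c * fst h $ 3 + d * snd h] :: real^2, snd h))"
        by (rule image_eqI[where x = "(vector [v$1, (v$2 - a * v$1 - d * s)/b, 0], s)"])
           (use assms vs in \<open>simp_all add: vec_eq_iff forall_2\<close>)
  qed
  then show ?thesis by simp
qed

lemma rank_low:
  fixes L :: "'a \<Rightarrow> real^2"
  assumes "\<And>h. L h = vector [f h, a * f h]"
  shows "dim (range L) < 2"
proof -
  have "range L \<subseteq> span {vector [1, a] :: real^2}"
  proof
    fix v assume "v \<in> range L"
    then obtain h where "v = L h" by auto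
    then have "v = f h *\<^sub>R vector [1, a]" using assms by (simp add: vec_eq_iff forall_2)
    then show "v \<in> span {vector [1, a]}" by (simp add: span_base span_scale)
  qed
  then have "dim (range L) \<le> card {vector [1, a] :: real^2}" by (rule dim_le_card) simp
  then show ?thesis by simp
qed

lemma GY_lower: "GY u \<ge> (u$3)^2 * (u$1)^2"
proof -
  have r: "rr u \<ge> (u$3)^2" "rr u \<ge> 0" unfolding rr_def by auto
  have "rr u * (u$1)^2 \<le> (rr u + 2*(u$2)^2) * (3*(u$2)^2*(rr u)^2 + (u$1)^2)"
    by (intro mult_mono) (use r in auto)
  moreover have "(u$3)^2 * (u$1)^2 \<le> rr u * (u$1)^2" by (intro mult_right_mono) (use r in auto)
  ultimately show ?thesis unfolding GY_def by linarith
qed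

lemma GY_pos: "u$2 \<noteq> 0 \<Longrightarrow> GY u \<noteq> 0"
proof -
  assume y: "u$2 \<noteq> 0"
  have "rr u > 0" unfolding rr_def using y by (simp add: add_pos_nonneg add_nonneg_pos)
  moreover have "0 \<le> 2*(u$2)^2" by simp
  ultimately have "rr u + 2*(u$2)^2 > 0" by linarith
  moreover have "3*(u$2)^2*(rr u)^2 + (u$1)^2 > 0" using y \<open>rr u > 0\<close> by (simp add: add_pos_nonneg)
  ultimately show ?thesis unfolding GY_def by simp
qed

lemma zero_iff: "k > 0 \<Longrightarrow> Fmap k p = 0 \<longleftrightarrow> fst p $ 1 = 0 \<and> fst p $ 2 = 0"
proof -
  assume k: "k > 0"
  have "Fmap k p = 0 \<longleftrightarrow> Fmap k p $ 1 = 0 \<and> Fmap k p $ 2 = 0" by (simp add: vec_eq_iff forall_2)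
  also have "\<dots> \<longleftrightarrow> fst p $ 1 = 0 \<and> fst p $ 2 = 0"
  proof
    assume h: "Fmap k p $ 1 = 0 \<and> Fmap k p $ 2 = 0"
    then have x: "fst p $ 1 = 0" by (simp add: Fmap_nth1)
    then have "(fst p $ 2 * ((fst p $ 2)^2 + (fst p $ 3)^2))^3 = 0" using h k by (simp add: Fmap_nth2 zero_power)
    then have "fst p $ 2 = 0 \<or> (fst p $ 2)^2 + (fst p $ 3)^2 = 0" by simp
    then show "fst p $ 1 = 0 \<and> fst p $ 2 = 0" using x by (auto simp: sum_power2_eq_zero_iff)
  qed (use k in \<open>simp add: Fmap_nth1 Fmap_nth2 zero_power\<close>)
  finally show ?thesis .
qed

lemma sing_iff: "k > 0 \<Longrightarrow> p \<in> Sing (Fmap k) \<longleftrightarrow> fst p $ 1 = 0 \<and> fst p $ 2 = 0"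
proof -
  assume k: "k > 0"
  have fd: "frechet_derivative (Fmap k) (at p) = DF k (fst p) (snd p)"
    using frechet_derivative_at[OF Fmap_der] by metis
  show ?thesis
  proof (cases "fst p $ 1 = 0 \<and> fst p $ 2 = 0")
    case True
    have "dim (range (DF k (fst p) (snd p))) < 2"
      by (rule rank_low[where f = "\<lambda>h. fst h $ 1" and a = "GX k (fst p) (snd p)"])
         (use True k in \<open>simp add: DF_def GY_def GZ_def zero_power\<close>)
    then show ?thesis using True by (simp add: Sing_def fd)
  next
    case False
    then have "GY (fst p) \<noteq> 0 \<or> (fst p $ 1)^k \<noteq> 0" using GY_pos by auto
    then have "dim (range (DF k (fst p) (snd p))) = 2"
      unfolding DF_def by (rule rank_full_Fmap)
    then show ?thesis using False by (simp add: Sing_def fd)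
  qed
qed
lemma L1:
  fixes x y t r R :: real
  assumes "\<bar>x\<bar> \<le> 1" "\<bar>y\<bar> \<le> 1" "\<bar>t\<bar> \<le> 1" "0 \<le> r" "r \<le> R"
  shows "\<bar>6*x*y^3*r^2 + 2*x*y*r + 2*x^3*y + t*real k*x^(k-1)\<bar> \<le> 6*R^2+2*R+2+real k"
proof -
  have y3: "\<bar>y\<bar>^3 \<le> 1" using assms(2) by (simp add: power_le_one)
  have x3: "\<bar>x\<bar>^3 \<le> 1" using assms(1) by (simp add: power_le_one)
  have xk: "\<bar>x\<bar>^(k-1) \<le> 1" using assms(1) by (simp add: power_le_one)
  have r2: "r^2 \<le> R^2" using assms(4,5) by (simp add: power_mono)
  have a1: "\<bar>6*x*y^3*r^2\<bar> \<le> 6*R^2"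
  proof -
    have "\<bar>6*x*y^3*r^2\<bar> = 6*(\<bar>x\<bar>*\<bar>y\<bar>^3*r^2)" by (simp add: abs_mult power_abs)
    also have "\<bar>x\<bar>*\<bar>y\<bar>^3*r^2 \<le> 1*1*R^2"
      by (intro mult_mono) (use assms y3 r2 in auto)
    finally show ?thesis by simp
  qed
  have a2: "\<bar>2*x*y*r\<bar> \<le> 2*R"
  proof -
    have "\<bar>2*x*y*r\<bar> = 2*(\<bar>x\<bar>*\<bar>y\<bar>*r)" using assms(4) by (simp add: abs_mult)
    also have "\<bar>x\<bar>*\<bar>y\<bar>*r \<le> 1*1*R"
      by (intro mult_mono) (use assms in auto)
    finally show ?thesis by simp
  qed
  have a3: "\<bar>2*x^3*y\<bar> \<le> 2"
  proof -
    have "\<bar>2*x^3*y\<bar> = 2*(\<bar>x\<bar>^3*\<bar>y\<bar>)" by (simp add: abs_mult power_abs)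
    also have "\<bar>x\<bar>^3*\<bar>y\<bar> \<le> 1*1"
      by (intro mult_mono) (use assms x3 in auto)
    finally show ?thesis by simp
  qed
  have a4: "\<bar>t*real k*x^(k-1)\<bar> \<le> real k"
  proof -
    have "\<bar>t*real k*x^(k-1)\<bar> = \<bar>t\<bar>*real k*\<bar>x\<bar>^(k-1)" by (simp add: abs_mult power_abs)
    also have "\<dots> \<le> 1*real k*1"
      by (intro mult_mono) (use assms xk in auto)
    finally show ?thesis by simp
  qed
  show ?thesis using a1 a2 a3 a4 by linarith
qed

lemma L2:
  fixes a b A B C M :: real
  assumes "a^2 + b^2 = 1" "\<bar>A\<bar> \<le> M" "0 \<le> M"
  shows "min 1 \<bar>B\<bar> / (2*(M+1)) \<le> sqrt ((a + b*A)^2 + (b*B)^2 + (b*C)^2)"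
proof -
  have M1: "2*(M+1) > 0" using assms by simp
  have s1: "\<bar>a + b*A\<bar> \<le> sqrt ((a + b*A)^2 + (b*B)^2 + (b*C)^2)"
    by (rule real_le_rsqrt) simp
  have s2: "\<bar>b*B\<bar> \<le> sqrt ((a + b*A)^2 + (b*B)^2 + (b*C)^2)"
    by (rule real_le_rsqrt) simp
  show ?thesis
  proof (cases "\<bar>b\<bar> \<ge> 1/(2*(M+1))")
    case True
    have "min 1 \<bar>B\<bar> / (2*(M+1)) \<le> \<bar>B\<bar> * (1/(2*(M+1)))" using M1
      by (simp add: divide_right_mono)
    also have "\<dots> \<le> \<bar>B\<bar> * \<bar>b\<bar>" using True by (intro mult_left_mono) auto
    also have "\<dots> = \<bar>b*B\<bar>" by (simp add: abs_mult)
    finally show ?thesis using s2 by linarith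
  next
    case False
    have "1/(2*(M+1)) \<le> 1/2" using assms(3) by (simp add: divide_simps)
    then have bs: "\<bar>b\<bar> \<le> 1/2" using False by linarith
    have "b^2 \<le> 1/4"
    proof -
      have "b^2 = \<bar>b\<bar>^2" by simp
      also have "\<dots> \<le> (1/2)^2" by (rule power_mono) (use bs in auto)
      also have "(1/2::real)^2 = 1/4" by (simp add: power2_eq_square)
      finally show ?thesis .
    qed
    then have "a^2 \<ge> 3/4" using assms(1) by linarith
    moreover have "0 \<le> b^2" by simp
    then have "a^2 \<le> 1" using assms(1) by linarith
    then have a1: "\<bar>a\<bar> \<le> 1" by (simp add: abs_square_le_1)
    have "\<bar>a\<bar> * \<bar>a\<bar> \<le> 1 * \<bar>a\<bar>" by (rule mult_right_mono) (use a1 in auto)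
    then have "a^2 \<le> \<bar>a\<bar>" by (simp add: power2_eq_square abs_mult[symmetric])
    ultimately have a34: "\<bar>a\<bar> \<ge> 3/4" by linarith
    have "\<bar>b*A\<bar> = \<bar>b\<bar>*\<bar>A\<bar>" by (simp add: abs_mult)
    also have "\<dots> \<le> (1/(2*(M+1))) * M" using False assms by (intro mult_mono) auto
    finally have bA: "\<bar>b*A\<bar> \<le> M/(2*(M+1))" by simp
    have "M/(2*(M+1)) + 1/(2*(M+1)) \<le> 3/4"
    proof -
      have "M/(2*(M+1)) + 1/(2*(M+1)) = 1/2" using M1 by (simp add: field_simps)
      then show ?thesis by linarith
    qed
    then have "\<bar>a + b*A\<bar> \<ge> 1/(2*(M+1))" using a34 bA by linarith
    moreover have "min 1 \<bar>B\<bar> / (2*(M+1)) \<le> 1/(2*(M+1))" using M1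
      by (simp add: divide_right_mono)
    ultimately show ?thesis using s1 by linarith
  qed
qed

lemma Fk0_zero_iff: "k > 0 \<Longrightarrow> Fk k u 0 = 0 \<longleftrightarrow> u $ 1 = 0 \<and> u $ 2 = 0"
  using zero_iff[of k "(u,0)"] by (simp add: Fmap_def)

lemma norm2: "norm (vector [p, q] :: real^2) = sqrt (p^2 + q^2)"
  by (simp add: norm_vec_def L2_set_def sum_2)

lemma comp_dist: "\<bar>u$i - p$i\<bar> \<le> dist (u, t) (p, s)" for u p :: "real^'n"
proof -
  have "\<bar>u$i - p$i\<bar> \<le> dist u p" using component_le_norm_cart[of "u - p" i] by (simp add: dist_norm)
  also have "\<dots> \<le> dist (u, t) (p, s)" using dist_fst_le[of "(u,t)" "(p,s)"] by simp
  finally show ?thesis .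
qed

lemma t_dist: "\<bar>t - s\<bar> \<le> dist (u, t) (p, s)"
  using dist_snd_le[of "(u,t)" "(p,s)"] by (simp add: dist_real_def)

lemma nu_bdd: "bdd_below {norm (vector [a$1 + a$2*A, a$2*B, a$2*C] :: real^3) | a::real^2. norm a = 1}"
  by (rule bdd_belowI[of _ 0]) auto

lemma claimL:
  assumes k: "k \<ge> 5"
  shows "\<not> (\<exists>\<theta>::real. 0 < \<theta> \<and> \<theta> < 1 \<and>
              (\<forall>x0 \<in> {u. Fk k u 0 = 0} \<inter> Sing (\<lambda>u. Fk k u 0) - {0}.
                 \<exists>c>0. \<exists>\<delta>>0. \<forall>u t. (u, t) \<notin> Sing (Ftilde k) \<and> dist (u, t) (x0, 0) < \<delta> \<longrightarrow>
                   norm (Fk k u t) powr \<theta> \<le> c * nu (\<lambda>v. Fk k v t) u))"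
proof
  assume "\<exists>\<theta>::real. 0 < \<theta> \<and> \<theta> < 1 \<and>
              (\<forall>x0 \<in> {u. Fk k u 0 = 0} \<inter> Sing (\<lambda>u. Fk k u 0) - {0}.
                 \<exists>c>0. \<exists>\<delta>>0. \<forall>u t. (u, t) \<notin> Sing (Ftilde k) \<and> dist (u, t) (x0, 0) < \<delta> \<longrightarrow>
                   norm (Fk k u t) powr \<theta> \<le> c * nu (\<lambda>v. Fk k v t) u)"
  then obtain \<theta> :: real where th: "0 < \<theta>" "\<theta> < 1" and H: "\<forall>x0 \<in> {u. Fk k u 0 = 0} \<inter> Sing (\<lambda>u. Fk k u 0) - {0}.
                 \<exists>c>0. \<exists>\<delta>>0. \<forall>u t. (u, t) \<notin> Sing (Ftilde k) \<and> dist (u, t) (x0, 0) < \<delta> \<longrightarrow>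
                   norm (Fk k u t) powr \<theta> \<le> c * nu (\<lambda>v. Fk k v t) u" by blast
  define x0 :: "real^3" where "x0 = vector [0, 0, 1]"
  have k0: "k > 0" using k by simp
  have x0z: "Fk k x0 0 = 0" using Fk0_zero_iff[OF k0] by (simp add: x0_def)
  have x0n: "x0 \<noteq> 0" by (simp add: x0_def vec_eq_iff forall_3)
  have x0s: "x0 \<in> Sing (\<lambda>u. Fk k u 0)"
  proof -
    have fd: "frechet_derivative (\<lambda>u. Fk k u 0) (at x0) = (\<lambda>h. vector [h$1, GX k x0 0 * h$1 + GY x0 * h$2 + GZ x0 * h$3])"
      using frechet_derivative_at[OF Fk_der] by metis
    have "dim (range (frechet_derivative (\<lambda>u. Fk k u 0) (at x0))) < 2"
      unfolding fd by (rule rank_low[where f = "\<lambda>h. h$1" and a = "GX k x0 0"])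
        (simp add: x0_def GY_def GZ_def)
    then show ?thesis by (simp add: Sing_def)
  qed
  obtain c \<delta> where c: "c > 0" and d: "\<delta> > 0" and HH: "\<And>u t. (u, t) \<notin> Sing (Ftilde k) \<Longrightarrow> dist (u, t) (x0, 0) < \<delta> \<Longrightarrow>
                   norm (Fk k u t) powr \<theta> \<le> c * nu (\<lambda>v. Fk k v t) u"
    using H x0z x0n x0s by blast
  define x where "x = min (\<delta>/2) (min (1/2) (1/(4*c)))"
  have xpos: "x > 0" using c d by (simp add: x_def)
  have xle: "x \<le> 1/2" "x < \<delta>" "x \<le> 1/(4*c)" using d by (auto simp: x_def)
  define u :: "real^3" where "u = vector [x, 0, 1]"
  have GYu: "GY u = (x^2+1) * x^2" by (simp add: GY_def u_def rr_def)
  have ns: "(u, 0) \<notin> Sing (Ftilde k)"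
  proof -
    have fd: "frechet_derivative (Ftilde k) (at (u,0)) = (\<lambda>h. (DF k u 0 h, snd h))"
      using frechet_derivative_at[OF Ftilde_der] by (metis fst_conv snd_conv)
    have "(0::real) \<le> x^2" by simp
    then have "x^2 + 1 \<noteq> 0" by linarith
    then have "GY u \<noteq> 0" using GYu xpos by simp
    then have "dim (range (\<lambda>h. (DF k u 0 h, snd h))) = 3"
      unfolding DF_def by (rule rank_full_Ftilde)
    then show ?thesis by (simp add: Sing_def fd)
  qed
  have dist: "dist (u, 0::real) (x0, 0) < \<delta>"
  proof -
    have "u - x0 = vector [x, 0, 0]" by (simp add: u_def x0_def vec_eq_iff forall_3)
    then have "dist u x0 = x" using xpos by (simp add: dist_norm norm3)
    then show ?thesis using xle xpos by (simp add: dist_Pair_Pair)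
  qed
  have nF: "norm (Fk k u 0) = x"
  proof -
    have "Fk k u 0 = vector [x, 0]" by (simp add: Fk_def Let_def u_def)
    then show ?thesis using xpos by (simp add: norm2)
  qed
  have nu_le: "nu (\<lambda>v. Fk k v 0) u \<le> 2 * x^2"
  proof -
    have "nu (\<lambda>v. Fk k v 0) u = Inf {norm (vector [a$1 + a$2*GX k u 0, a$2*GY u, a$2*GZ u] :: real^3) | a::real^2. norm a = 1}"
      by (rule nu_formula[OF Fk_der])
    also have "\<dots> \<le> norm (vector [(vector [0,1]::real^2)$1 + (vector [0,1]::real^2)$2*GX k u 0, (vector [0,1]::real^2)$2*GY u, (vector [0,1]::real^2)$2*GZ u] :: real^3)"
      by (rule cInf_lower[OF _ nu_bdd]) (auto simp: norm2 intro!: exI[of _ "vector [0,1]"])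
    also have "\<dots> = (x^2+1)*x^2" using GYu by (simp add: norm3 GX_def GZ_def u_def)
    also have "\<dots> \<le> 2 * x^2"
    proof -
      have "x^2 \<le> 1" using xpos xle by (simp add: power_le_one)
      then show ?thesis by (intro mult_right_mono) auto
    qed
    finally show ?thesis .
  qed
  have "x = x powr 1" using xpos by simp
  also have "\<dots> \<le> x powr \<theta>" by (rule powr_mono') (use th xpos xle in auto)
  also have "\<dots> \<le> c * nu (\<lambda>v. Fk k v 0) u" using HH[OF ns dist] nF by simp
  also have "\<dots> \<le> c * (2 * x^2)" using nu_le c by simp
  also have "\<dots> = x * (2*c*x)" by (simp add: power2_eq_square)
  also have "\<dots> < x * 1"
  proof -
    have "2*c*x \<le> 2*c*(1/(4*c))" by (rule mult_left_mono) (use xle c in auto)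
    also have "\<dots> = 1/2" using c by simp
    finally show ?thesis using xpos by simp
  qed
  finally show False by simp
qed

lemma claimP:
  assumes k: "k \<ge> 5"
  shows "\<forall>p \<in> {u. Fk k u 0 = 0} \<inter> Sing (\<lambda>u. Fk k u 0) - {0}.
            \<exists>c>0. \<exists>\<delta>>0. \<forall>u t. (u, t) \<notin> Sing (Ftilde k) \<and> dist (u, t) (p, 0) < \<delta> \<longrightarrow>
              norm (vector_derivative (\<lambda>s. Fk k u s) (at t)) \<le> c * nu (\<lambda>v. Fk k v t) u"
proof
  fix p assume "p \<in> {u. Fk k u 0 = 0} \<inter> Sing (\<lambda>u. Fk k u 0) - {0}"
  then have pz: "Fk k p 0 = 0" and pn: "p \<noteq> 0" by auto
  have k0: "k > 0" using k by simp
  have p12: "p$1 = 0" "p$2 = 0" using Fk0_zero_iff[OF k0] pz by auto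
  have z0: "p$3 \<noteq> 0" using pn p12 by (auto simp: vec_eq_iff forall_3)
  define m where "m = (p$3)^2"
  have m: "m > 0" using z0 by (simp add: m_def)
  define R where "R = 2 + 4*m"
  define M where "M = 6*R^2+2*R+2+real k"
  define K where "K = max 1 (4/m)"
  define c where "c = 2*K*(M+1)"
  define \<delta> where "\<delta> = min 1 (\<bar>p$3\<bar>/2)"
  have R0: "R \<ge> 0" using m by (simp add: R_def)
  have M0: "M \<ge> 0" using R0 by (simp add: M_def)
  have K1: "K \<ge> 1" by (simp add: K_def)
  have cpos: "c > 0" using K1 M0 by (simp add: c_def)
  have dpos: "\<delta> > 0" using z0 by (simp add: \<delta>_def)
  show "\<exists>c>0. \<exists>\<delta>>0. \<forall>u t. (u, t) \<notin> Sing (Ftilde k) \<and> dist (u, t) (p, 0) < \<delta> \<longrightarrow>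
              norm (vector_derivative (\<lambda>s. Fk k u s) (at t)) \<le> c * nu (\<lambda>v. Fk k v t) u"
  proof (rule exI[of _ c], intro conjI cpos, rule exI[of _ \<delta>], intro conjI dpos allI impI)
    fix u t assume "(u, t) \<notin> Sing (Ftilde k) \<and> dist (u, t) (p, 0) < \<delta>"
    then have dd: "dist (u, t) (p, 0) < \<delta>" by simp
    have hx: "\<bar>u$1\<bar> \<le> 1" using comp_dist[of u 1 p t 0] dd p12 by (simp add: \<delta>_def)
    have hy: "\<bar>u$2\<bar> \<le> 1" using comp_dist[of u 2 p t 0] dd p12 by (simp add: \<delta>_def)
    have ht: "\<bar>t\<bar> \<le> 1" using t_dist[of t 0 u p] dd by (simp add: \<delta>_def)
    have hz: "\<bar>u$3 - p$3\<bar> < \<bar>p$3\<bar>/2" using comp_dist[of u 3 p t 0] dd by (simp add: \<delta>_def)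
    have zlo: "\<bar>p$3\<bar>/2 \<le> \<bar>u$3\<bar>" using hz by linarith
    have zhi: "\<bar>u$3\<bar> \<le> 2*\<bar>p$3\<bar>" using hz by linarith
    have z2lo: "m/4 \<le> (u$3)^2"
    proof -
      have "(\<bar>p$3\<bar>/2)^2 \<le> \<bar>u$3\<bar>^2" by (rule power_mono[OF zlo]) simp
      then show ?thesis by (simp add: m_def power_divide)
    qed
    have z2hi: "(u$3)^2 \<le> 4*m"
    proof -
      have "\<bar>u$3\<bar>^2 \<le> (2*\<bar>p$3\<bar>)^2" by (rule power_mono[OF zhi]) simp
      then show ?thesis by (simp add: m_def power_mult_distrib)
    qed
    have x2: "(u$1)^2 \<le> 1" using hx by (simp add: abs_square_le_1)
    have y2: "(u$2)^2 \<le> 1" using hy by (simp add: abs_square_le_1)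
    have rr0: "rr u \<ge> 0" by (simp add: rr_def)
    have rrR: "rr u \<le> R" using x2 y2 z2hi by (simp add: rr_def R_def)
    have GXb: "\<bar>GX k u t\<bar> \<le> M"
      unfolding GX_def M_def by (rule L1[OF hx hy ht rr0 rrR])
    have GYl: "GY u \<ge> m/4 * (u$1)^2"
    proof -
      have "m/4 * (u$1)^2 \<le> (u$3)^2 * (u$1)^2" by (rule mult_right_mono[OF z2lo]) simp
      then show ?thesis using GY_lower[of u] by linarith
    qed
    have GY0: "GY u \<ge> 0" using GYl m by (smt (verit) mult_nonneg_nonneg zero_le_power2 divide_nonneg_pos)
    have vd: "norm (vector_derivative (\<lambda>s. Fk k u s) (at t)) = \<bar>u$1\<bar>^k"
      using vector_derivative_at[OF Fk_t_der[of k u t]] by (simp add: norm2 power_abs)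
    have nul: "min 1 \<bar>GY u\<bar> / (2*(M+1)) \<le> nu (\<lambda>v. Fk k v t) u"
    proof -
      have "nu (\<lambda>v. Fk k v t) u = Inf {norm (vector [a$1 + a$2*GX k u t, a$2*GY u, a$2*GZ u] :: real^3) | a::real^2. norm a = 1}"
        by (rule nu_formula[OF Fk_der])
      also have "min 1 \<bar>GY u\<bar> / (2*(M+1)) \<le> \<dots>"
      proof (rule cInf_greatest)
        show "{norm (vector [a$1 + a$2*GX k u t, a$2*GY u, a$2*GZ u] :: real^3) | a::real^2. norm a = 1} \<noteq> {}"
          by (auto simp: norm2 intro!: exI[of _ "vector [1,0]"])
      next
        fix w assume "w \<in> {norm (vector [a$1 + a$2*GX k u t, a$2*GY u, a$2*GZ u] :: real^3) | a::real^2. norm a = 1}"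
        then obtain a :: "real^2" where a: "norm a = 1" and w: "w = norm (vector [a$1 + a$2*GX k u t, a$2*GY u, a$2*GZ u] :: real^3)" by auto
        have "norm a = sqrt ((a$1)^2 + (a$2)^2)" by (simp add: norm_vec_def L2_set_def sum_2)
        then have "(a$1)^2 + (a$2)^2 = 1" using a by simp
        from L2[OF this GXb M0, of "GY u" "GZ u"]
        show "min 1 \<bar>GY u\<bar> / (2*(M+1)) \<le> w" by (simp add: w norm3)
      qed
      finally show ?thesis .
    qed
    have main: "\<bar>u$1\<bar>^k \<le> K * min 1 \<bar>GY u\<bar>"
    proof -
      have a1: "\<bar>u$1\<bar>^k \<le> 1" using hx by (simp add: power_le_one)
      have "\<bar>u$1\<bar>^k \<le> \<bar>u$1\<bar>^2" by (rule power_decreasing) (use k hx in auto)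
      also have "\<dots> = (u$1)^2" by simp
      also have "\<dots> \<le> (4/m) * GY u"
      proof -
        have "(4/m) * (m/4 * (u$1)^2) \<le> (4/m) * GY u" by (rule mult_left_mono[OF GYl]) (use m in auto)
        then show ?thesis using m by simp
      qed
      finally have a2: "\<bar>u$1\<bar>^k \<le> (4/m) * \<bar>GY u\<bar>" using GY0 by simp
      show ?thesis
      proof (cases "1 \<le> \<bar>GY u\<bar>")
        case True then show ?thesis using a1 K1 by simp
      next
        case False
        have "(4/m) * \<bar>GY u\<bar> \<le> K * \<bar>GY u\<bar>" by (rule mult_right_mono) (auto simp: K_def)
        then show ?thesis using False a2 by simp
      qed
    qed
    have "\<bar>u$1\<bar>^k \<le> c * (min 1 \<bar>GY u\<bar> / (2*(M+1)))"
    proof -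
      have "c * (min 1 \<bar>GY u\<bar> / (2*(M+1))) = K * min 1 \<bar>GY u\<bar>"
        using M0 unfolding c_def by (simp add: field_simps)
      then show ?thesis using main by simp
    qed
    also have "\<dots> \<le> c * nu (\<lambda>v. Fk k v t) u" using mult_left_mono[OF nul, of c] cpos by simp
    finally have "\<bar>u$1\<bar>^k \<le> c * nu (\<lambda>v. Fk k v t) u" .
    then show "norm (vector_derivative (\<lambda>s. Fk k u s) (at t)) \<le> c * nu (\<lambda>v. Fk k v t) u" using vd by simp
  qed
qed

theorem mainTheorem9:
  fixes k :: nat
  assumes "k \<ge> 5"
  shows "Sing (Fmap k) = {p. Fmap k p = 0}
       \<and> {p. Fmap k p = 0} = {(u, t). u$1 = 0 \<and> u$2 = 0}
       \<and> \<not> (\<exists>\<theta>::real. 0 < \<theta> \<and> \<theta> < 1 \<and>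
              (\<forall>x0 \<in> {u. Fk k u 0 = 0} \<inter> Sing (\<lambda>u. Fk k u 0) - {0}.
                 \<exists>c>0. \<exists>\<delta>>0. \<forall>u t. (u, t) \<notin> Sing (Ftilde k) \<and> dist (u, t) (x0, 0) < \<delta> \<longrightarrow>
                   norm (Fk k u t) powr \<theta> \<le> c * nu (\<lambda>v. Fk k v t) u))
       \<and> (\<forall>p \<in> {u. Fk k u 0 = 0} \<inter> Sing (\<lambda>u. Fk k u 0) - {0}.
            \<exists>c>0. \<exists>\<delta>>0. \<forall>u t. (u, t) \<notin> Sing (Ftilde k) \<and> dist (u, t) (p, 0) < \<delta> \<longrightarrow>
              norm (vector_derivative (\<lambda>s. Fk k u s) (at t)) \<le> c * nu (\<lambda>v. Fk k v t) u)"
proof -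
  have k0: "k > 0" using assms by simp
  have 1: "Sing (Fmap k) = {p. Fmap k p = 0}"
    using sing_iff[OF k0] zero_iff[OF k0] by auto
  have 2: "{p. Fmap k p = 0} = {(u, t). u$1 = 0 \<and> u$2 = 0}"
    using zero_iff[OF k0] by auto
  show ?thesis using 1 2 claimL[OF assms] claimP[OF assms] by blast
qed

end
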